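(* Let $A=\mathbb{R}^4_\theta$ with its Riemannian structure $(g,(\nabla,\sigma))$, and $B=A/(f)$ the noncommutative hypersurface with $\nu=\mathrm{d}f$, as in the context. Then (A1) $\sigma(\omega\otimes_A\nu)=\nu\otimes_A\omega$ and $\sigma(\nu\otimes_A\omega)=\omega\otimes_A\nu$ for all $\omega\in\Omega^1_A$, and (A2) $\sigma\circ(\Pi\otimes_B\mathrm{id})=(\mathrm{id}\otimes_B\Pi)\circ\sigma$ and $\sigma\circ(\mathrm{id}\otimes_B\Pi)=(\Pi\otimes_B\mathrm{id})\circ\sigma$ on $q_!(\Omega^1_A)\otimes_Bq_!(\Omega^1_A)$ hold. The induced Riemannian structure $(g_B,(\nabla_B,\sigma_B))$ on $(\Omega^1_B,\mathrm{d}_B)$ is explicitly given (all expressions denoting classes) by $g_B=\sum_{i,j}g_{ij}\,\mathrm{d}z^i\otimes_B\mathrm{d}z^j$, $g_B^{-1}(\mathrm{d}z^i\otimes_B\mathrm{d}z^j)=g^{ij}-z^iz^j$, $\nabla_B(\mathrm{d}z^i)=-z^i\sum_{k,l}g_{kl}\,\mathrm{d}z^k\otimes_B\mathrm{d}z^l$, $\sigma_B(\mathrm{d}z^i\otimes_B\mathrm{d}z^j)=R^{ji}\,\mathrm{d}z^j\otimes_B\mathrm{d}z^i$.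
   Context: $\theta\in\mathbb{R}$; $R=(R^{ab})$ (row $a$, column $b$) with rows $(1,e^{-i\theta},1,e^{i\theta})$, $(e^{i\theta},1,e^{-i\theta},1)$, $(1,e^{i\theta},1,e^{-i\theta})$, $(e^{-i\theta},1,e^{i\theta},1)$; $A=\mathbb{C}\langle z^1,\dots,z^4\rangle/(z^iz^j-R^{ji}z^jz^i)$; $\Omega^1_A=\bigoplus_iA\,\mathrm{d}z^i$ free left module with $\mathrm{d}z^i\,z^j=R^{ji}z^j\mathrm{d}z^i$, $\mathrm{d}$ the Leibniz extension of $z^i\mapsto\mathrm{d}z^i$. $P$ the matrix with rows $(0,0,1,0),(0,0,0,1),(1,0,0,0),(0,1,0,0)$; $(g_{ij})=\tfrac12P$, $(g^{ij})=2P$; $g=\sum g_{ij}\mathrm{d}z^i\otimes_A\mathrm{d}z^j$, $g^{-1}(\mathrm{d}z^i\otimes_A\mathrm{d}z^j)=g^{ij}$; $\nabla(\sum a_i\mathrm{d}z^i)=\sum\mathrm{d}a_i\otimes_A\mathrm{d}z^i$; $\sigma$ left $A$-linear with $\sigma(\mathrm{d}z^i\otimes_A\mathrm{d}z^j)=R^{ji}\mathrm{d}z^j\otimes_A\mathrm{d}z^i$. $f=\tfrac12(z^1z^3+z^2z^4-1)$, central; $B=A/(f)$, $q:A\to B$, classes $[\cdot]$; $\nu=\mathrm{d}f=\sum g_{ij}z^i\mathrm{d}z^j$ (central, $[g^{-1}(\nu\otimes\nu)]=1$). $q_!(\Omega^1_A)=\Omega^1_A/(f\Omega^1_A+\Omega^1_Af)$;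 $\Omega^1_B=q_!(\Omega^1_A)/N^1_B$ with $N^1_B$ the $B$-subbimodule generated by $[\mathrm{d}a]$, $a\in(f)$; $\mathrm{d}_B[a]=[\mathrm{d}a]$. $\Pi[\omega]=[\omega-g^{-1}(\omega\otimes_A\nu)\nu]$ on $q_!(\Omega^1_A)$, inducing a section $\Pi:\Omega^1_B\to q_!(\Omega^1_A)$ of the quotient map; $\sigma$ and $\nabla$ descend to classes. Induced structure: $g_B$ is the image of $[g]$ in $\Omega^1_B\otimes_B\Omega^1_B$; $g_B^{-1}([\omega]\otimes_B[\zeta])=[g^{-1}(\Pi(\omega)\otimes_A\Pi(\zeta))]$; $\nabla_B([\omega])$ the image of $[\nabla(\Pi(\omega))]$ in $\Omega^1_B\otimes_B\Omega^1_B$; $\sigma_B([\omega]\otimes_B[\zeta])=[\sigma(\omega\otimes_A\zeta)]$. *)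

theory Defs
  imports Complex_Main "HOL-Library.Function_Algebras"
begin

text \<open>The free algebra
  C<z1,...,z4> is modelled by functions from words (nat lists over the
  letters 1..4) to complex coefficients; polynomials are those with finite
  support on words over 1..4.  All quotients (A, B, Omega^1_A, q_!,
  Omega^1_B, and the tensor products) are realised as equivalence relations
  on representatives, given by explicit generated submodules.\<close>

type_synonym fa = "nat list \<Rightarrow> complex"
type_synonym form1 = "nat \<Rightarrow> fa"          \<comment> \<open>coefficient of dz^k\<close>
type_synonym form2 = "nat \<Rightarrow> nat \<Rightarrow> fa"  \<comment> \<open>coefficient of dz^i (x) dz^j\<close>

definition poly_fa :: "fa \<Rightarrow> bool" where
  "poly_fa p \<longleftrightarrow> finite {w. p w \<noteq> 0} \<and> (\<forall>w. p w \<noteq> 0 \<longrightarrow> set w \<subseteq> {1..4})"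

definition polyO :: "form1 \<Rightarrow> bool" where
  "polyO \<omega> \<longleftrightarrow> (\<forall>k\<in>{1..4}. poly_fa (\<omega> k))"

definition polyT :: "form2 \<Rightarrow> bool" where
  "polyT T \<longleftrightarrow> (\<forall>i\<in>{1..4}. \<forall>j\<in>{1..4}. poly_fa (T i j))"

definition fmul :: "fa \<Rightarrow> fa \<Rightarrow> fa" where
  "fmul p q = (\<lambda>w. \<Sum>k\<le>length w. p (take k w) * q (drop k w))"

definition csc :: "complex \<Rightarrow> fa \<Rightarrow> fa" where
  "csc c p = (\<lambda>w. c * p w)"

definition mono :: "nat list \<Rightarrow> fa" where
  "mono u = (\<lambda>w. if w = u then 1 else 0)"

definition cst :: "complex \<Rightarrow> fa" where
  "cst c = (\<lambda>w. if w = [] then c else 0)"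

definition gen :: "nat \<Rightarrow> fa" where
  "gen i = mono [i]"

definition Rm :: "real \<Rightarrow> nat \<Rightarrow> nat \<Rightarrow> complex" where
  "Rm \<theta> a b = (let e = exp (\<i> * complex_of_real \<theta>); e' = exp (- \<i> * complex_of_real \<theta>) in
     [[1, e', 1, e], [e, 1, e', 1], [1, e, 1, e'], [e', 1, e, 1]] ! (a - 1) ! (b - 1))"

definition Pm :: "nat \<Rightarrow> nat \<Rightarrow> complex" where
  "Pm i j = (if (i, j) \<in> {(1,3), (2,4), (3,1), (4,2)} then 1 else 0)"

definition gmat :: "nat \<Rightarrow> nat \<Rightarrow> complex" where
  "gmat i j = Pm i j / 2"

definition ginvmat :: "nat \<Rightarrow> nat \<Rightarrow> complex" where
  "ginvmat i j = 2 * Pm i j"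

definition rels :: "real \<Rightarrow> fa set" where
  "rels \<theta> = {fmul (gen i) (gen j) - csc (Rm \<theta> j i) (fmul (gen j) (gen i)) | i j.
               i \<in> {1..4} \<and> j \<in> {1..4}}"

definition f_el :: fa where
  "f_el = csc (1/2) (fmul (gen 1) (gen 3) + fmul (gen 2) (gen 4) - cst 1)"

inductive_set ideal_gen :: "fa set \<Rightarrow> fa set" for G where
  ig_zero: "0 \<in> ideal_gen G"
| ig_gen: "g \<in> G \<Longrightarrow> g \<in> ideal_gen G"
| ig_add: "x \<in> ideal_gen G \<Longrightarrow> y \<in> ideal_gen G \<Longrightarrow> x + y \<in> ideal_gen G"
| ig_smult: "x \<in> ideal_gen G \<Longrightarrow> csc c x \<in> ideal_gen G"
| ig_mult: "x \<in> ideal_gen G \<Longrightarrow> set u \<subseteq> {1..4} \<Longrightarrow> set v \<subseteq> {1..4} \<Longrightarrow>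
            fmul (mono u) (fmul x (mono v)) \<in> ideal_gen G"

text \<open>Preimages in the free algebra of 0 in A and of the ideal (f) of A.\<close>
definition IA :: "real \<Rightarrow> fa set" where
  "IA \<theta> = ideal_gen (rels \<theta>)"

definition IB :: "real \<Rightarrow> fa set" where
  "IB \<theta> = ideal_gen (rels \<theta> \<union> {f_el})"

definition eqA :: "real \<Rightarrow> fa \<Rightarrow> fa \<Rightarrow> bool" where
  "eqA \<theta> p q \<longleftrightarrow> p - q \<in> IA \<theta>"

definition eqB :: "real \<Rightarrow> fa \<Rightarrow> fa \<Rightarrow> bool" where
  "eqB \<theta> p q \<longleftrightarrow> p - q \<in> IB \<theta>"

text \<open>Commutation of dz^i past a word: dz^i z^k = R^{ki} z^k dz^i.\<close>
definition ph :: "real \<Rightarrow> nat \<Rightarrow> nat list \<Rightarrow> complex" where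
  "ph \<theta> i w = prod_list (map (\<lambda>k. Rm \<theta> k i) w)"

definition shift :: "real \<Rightarrow> nat \<Rightarrow> fa \<Rightarrow> fa" where
  "shift \<theta> i b = (\<lambda>w. ph \<theta> i w * b w)"

definition dz :: "nat \<Rightarrow> form1" where
  "dz i = (\<lambda>k. if k = i then cst 1 else 0)"

definition lsc :: "fa \<Rightarrow> form1 \<Rightarrow> form1" where
  "lsc a \<omega> = (\<lambda>k. fmul a (\<omega> k))"

definition rsc :: "real \<Rightarrow> form1 \<Rightarrow> fa \<Rightarrow> form1" where
  "rsc \<theta> \<omega> b = (\<lambda>k. fmul (\<omega> k) (shift \<theta> k b))"

text \<open>Leibniz extension of z^i to dz^i, written in the left basis: coefficient
  of dz^k at word v collects the words with the letter k inserted in v.\<close>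
definition dA :: "real \<Rightarrow> fa \<Rightarrow> form1" where
  "dA \<theta> p = (\<lambda>k v. \<Sum>m\<le>length v. p (take m v @ k # drop m v) * ph \<theta> k (drop m v))"

definition nu :: form1 where
  "nu = (\<lambda>j. \<Sum>i\<in>{1..4}. csc (gmat i j) (gen i))"

definition eqOA :: "real \<Rightarrow> form1 \<Rightarrow> form1 \<Rightarrow> bool" where
  "eqOA \<theta> \<omega> \<zeta> \<longleftrightarrow> (\<forall>k\<in>{1..4}. eqA \<theta> (\<omega> k) (\<zeta> k))"

definition tens :: "real \<Rightarrow> form1 \<Rightarrow> form1 \<Rightarrow> form2" where
  "tens \<theta> \<omega> \<zeta> = (\<lambda>i j. fmul (\<omega> i) (shift \<theta> i (\<zeta> j)))"

definition tlsc :: "fa \<Rightarrow> form2 \<Rightarrow> form2" where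
  "tlsc a T = (\<lambda>i j. fmul a (T i j))"

definition eqTA :: "real \<Rightarrow> form2 \<Rightarrow> form2 \<Rightarrow> bool" where
  "eqTA \<theta> S T \<longleftrightarrow> (\<forall>i\<in>{1..4}. \<forall>j\<in>{1..4}. eqA \<theta> (S i j) (T i j))"

definition gA :: form2 where
  "gA = (\<lambda>i j. cst (gmat i j))"

definition ginv :: "form2 \<Rightarrow> fa" where
  "ginv T = (\<Sum>i\<in>{1..4}. \<Sum>j\<in>{1..4}. csc (ginvmat i j) (T i j))"

definition sigma :: "real \<Rightarrow> form2 \<Rightarrow> form2" where
  "sigma \<theta> T = (\<lambda>a b. csc (Rm \<theta> a b) (T b a))"

definition nabla :: "real \<Rightarrow> form1 \<Rightarrow> form2" where
  "nabla \<theta> \<omega> = (\<Sum>k\<in>{1..4}. tens \<theta> (dA \<theta> (\<omega> k)) (dz k))"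

definition Pi :: "real \<Rightarrow> form1 \<Rightarrow> form1" where
  "Pi \<theta> \<omega> = \<omega> - lsc (ginv (tens \<theta> \<omega> nu)) nu"

definition PiL :: "real \<Rightarrow> form2 \<Rightarrow> form2" where
  "PiL \<theta> T = (\<Sum>i\<in>{1..4}. \<Sum>j\<in>{1..4}. tlsc (T i j) (tens \<theta> (Pi \<theta> (dz i)) (dz j)))"

definition PiR :: "real \<Rightarrow> form2 \<Rightarrow> form2" where
  "PiR \<theta> T = (\<Sum>i\<in>{1..4}. \<Sum>j\<in>{1..4}. tlsc (T i j) (tens \<theta> (dz i) (Pi \<theta> (dz j))))"

text \<open>Preimage in Omega^1_A of f Omega^1_A + Omega^1_A f (kernel of Omega^1_A -> q_!(Omega^1_A)).\<close>
definition QsubA :: "real \<Rightarrow> form1 set" where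
  "QsubA \<theta> = {x. \<exists>\<omega> \<omega>'. polyO \<omega> \<and> polyO \<omega>' \<and> eqOA \<theta> x (lsc f_el \<omega> + rsc \<theta> \<omega>' f_el)}"

text \<open>Preimage in Omega^1_A of N^1_B (kernel of Omega^1_A -> Omega^1_B).\<close>
inductive_set NB :: "real \<Rightarrow> form1 set" for \<theta> where
  nb_q: "x \<in> QsubA \<theta> \<Longrightarrow> x \<in> NB \<theta>"
| nb_d: "a \<in> IB \<theta> \<Longrightarrow> dA \<theta> a \<in> NB \<theta>"
| nb_l: "x \<in> NB \<theta> \<Longrightarrow> set u \<subseteq> {1..4} \<Longrightarrow> lsc (mono u) x \<in> NB \<theta>"
| nb_r: "x \<in> NB \<theta> \<Longrightarrow> set u \<subseteq> {1..4} \<Longrightarrow> rsc \<theta> x (mono u) \<in> NB \<theta>"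
| nb_add: "x \<in> NB \<theta> \<Longrightarrow> y \<in> NB \<theta> \<Longrightarrow> x + y \<in> NB \<theta>"
| nb_smult: "x \<in> NB \<theta> \<Longrightarrow> (\<lambda>k. csc c (x k)) \<in> NB \<theta>"
| nb_eq: "x \<in> NB \<theta> \<Longrightarrow> eqOA \<theta> y x \<Longrightarrow> y \<in> NB \<theta>"

text \<open>Kernel of Omega^1_A (x)_A Omega^1_A -> q_!(Omega^1_A) (x)_B q_!(Omega^1_A).\<close>
inductive_set KQ :: "real \<Rightarrow> form2 set" for \<theta> where
  kq_zero: "0 \<in> KQ \<theta>"
| kq_l: "x \<in> QsubA \<theta> \<Longrightarrow> polyO \<zeta> \<Longrightarrow> tens \<theta> x \<zeta> \<in> KQ \<theta>"
| kq_r: "polyO \<omega> \<Longrightarrow> y \<in> QsubA \<theta> \<Longrightarrow> tens \<theta> \<omega> y \<in> KQ \<theta>"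
| kq_add: "S \<in> KQ \<theta> \<Longrightarrow> T \<in> KQ \<theta> \<Longrightarrow> S + T \<in> KQ \<theta>"
| kq_eq: "S \<in> KQ \<theta> \<Longrightarrow> eqTA \<theta> T S \<Longrightarrow> T \<in> KQ \<theta>"

text \<open>Kernel of Omega^1_A (x)_A Omega^1_A -> Omega^1_B (x)_B Omega^1_B.\<close>
inductive_set KB :: "real \<Rightarrow> form2 set" for \<theta> where
  kb_zero: "0 \<in> KB \<theta>"
| kb_l: "x \<in> NB \<theta> \<Longrightarrow> polyO \<zeta> \<Longrightarrow> tens \<theta> x \<zeta> \<in> KB \<theta>"
| kb_r: "polyO \<omega> \<Longrightarrow> y \<in> NB \<theta> \<Longrightarrow> tens \<theta> \<omega> y \<in> KB \<theta>"
| kb_add: "S \<in> KB \<theta> \<Longrightarrow> T \<in> KB \<theta> \<Longrightarrow> S + T \<in> KB \<theta>"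
| kb_eq: "S \<in> KB \<theta> \<Longrightarrow> eqTA \<theta> T S \<Longrightarrow> T \<in> KB \<theta>"

definition eqTQ :: "real \<Rightarrow> form2 \<Rightarrow> form2 \<Rightarrow> bool" where
  "eqTQ \<theta> S T \<longleftrightarrow> S - T \<in> KQ \<theta>"

definition eqTB :: "real \<Rightarrow> form2 \<Rightarrow> form2 \<Rightarrow> bool" where
  "eqTB \<theta> S T \<longleftrightarrow> S - T \<in> KB \<theta>"

end

theory Submission
  imports Defs
begin


lemma sumf_apply: "(\<Sum>i\<in>A. F i) x = (\<Sum>i\<in>A. F i x)"
  by (induction A rule: infinite_finite_induct) auto

lemma csc_apply[simp]: "csc c p w = c * p w" by (simp add: csc_def)

lemma mono_apply: "mono u w = (if w = u then 1 else 0)" by (simp add: mono_def)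

lemma fmul_add_left: "fmul (p + q) r = fmul p r + fmul q r"
  by (simp add: fmul_def fun_eq_iff distrib_right sum.distrib)
lemma fmul_add_right: "fmul r (p + q) = fmul r p + fmul r q"
  by (simp add: fmul_def fun_eq_iff distrib_left sum.distrib)
lemma fmul_diff_left: "fmul (p - q) r = fmul p r - fmul q r"
  by (simp add: fmul_def fun_eq_iff left_diff_distrib sum_subtractf)
lemma fmul_diff_right: "fmul r (p - q) = fmul r p - fmul r q"
  by (simp add: fmul_def fun_eq_iff right_diff_distrib sum_subtractf)
lemma fmul_csc_left: "fmul (csc c p) q = csc c (fmul p q)"
  by (simp add: fmul_def fun_eq_iff sum_distrib_left mult.assoc)
lemma fmul_csc_right: "fmul p (csc c q) = csc c (fmul p q)"
  by (simp add: fmul_def fun_eq_iff sum_distrib_left mult_ac)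
lemma fmul_zero_left: "fmul 0 q = 0" by (simp add: fmul_def fun_eq_iff)
lemma fmul_zero_right: "fmul q 0 = 0" by (simp add: fmul_def fun_eq_iff)
lemma fmul_neg_left: "fmul (- p) q = - fmul p q"
  by (simp add: fmul_def fun_eq_iff sum_negf)
lemma fmul_neg_right: "fmul q (- p) = - fmul q p"
  by (simp add: fmul_def fun_eq_iff sum_negf)
lemma fmul_sum_left: "fmul (\<Sum>i\<in>A. F i) q = (\<Sum>i\<in>A. fmul (F i) q)"
  by (induction A rule: infinite_finite_induct) (simp_all only: sum.insert sum.empty sum.infinite not_False_eq_True fmul_zero_left fmul_add_left)
lemma fmul_sum_right: "fmul q (\<Sum>i\<in>A. F i) = (\<Sum>i\<in>A. fmul q (F i))"
  by (induction A rule: infinite_finite_induct) (simp_all only: sum.insert sum.empty sum.infinite not_False_eq_True fmul_zero_right fmul_add_right)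

lemma fmul_mono: "fmul (mono u) (mono v) = mono (u @ v)"
proof (rule ext)
  fix w
  have "fmul (mono u) (mono v) w = (\<Sum>k\<le>length w. if k = length u \<and> w = u @ v then 1 else 0)"
    unfolding fmul_def mono_def
    apply (rule sum.cong, simp)
    apply (auto simp: append_eq_conv_conj)
    done
  also have "\<dots> = mono (u @ v) w"
    by (auto simp: mono_def)
  finally show "fmul (mono u) (mono v) w = mono (u @ v) w" .
qed

lemma cst_mono: "cst c = csc c (mono [])" by (simp add: cst_def mono_def fun_eq_iff)

lemma csc_csc: "csc a (csc b p) = csc (a * b) p" by (simp add: csc_def fun_eq_iff)
lemma csc_one: "csc 1 p = p" by (simp add: csc_def fun_eq_iff)
lemma csc_zero: "csc 0 p = 0" by (simp add: csc_def fun_eq_iff)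
lemma csc_zero2: "csc c 0 = 0" by (simp add: csc_def fun_eq_iff)
lemma csc_add: "csc c (p + q) = csc c p + csc c q" by (simp add: csc_def fun_eq_iff algebra_simps)
lemma csc_diff: "csc c (p - q) = csc c p - csc c q" by (simp add: csc_def fun_eq_iff algebra_simps)
lemma csc_neg: "csc c (- p) = - csc c p" by (simp add: csc_def fun_eq_iff algebra_simps)
lemma csc_sum: "csc c (\<Sum>i\<in>A. F i) = (\<Sum>i\<in>A. csc c (F i))"
  by (induction A rule: infinite_finite_induct) (simp_all only: sum.insert sum.empty sum.infinite not_False_eq_True csc_zero2 csc_add)
lemma csc_m1: "csc (-1) p = - p" by (simp add: csc_def fun_eq_iff)

lemma fmul_one_left: "fmul (cst 1) p = p"
  by (simp add: fmul_def cst_def fun_eq_iff sum.atMost_shift)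
lemma fmul_one_right: "fmul p (cst 1) = p"
proof (rule ext)
  fix w
  have "fmul p (cst 1) w = (\<Sum>k\<le>length w. if k = length w then p w else 0)"
    unfolding fmul_def cst_def by (rule sum.cong) auto
  then show "fmul p (cst 1) w = p w" by simp
qed

lemma ph_append: "ph \<theta> i (u @ v) = ph \<theta> i u * ph \<theta> i v" by (simp add: ph_def)

lemma shift_mono: "shift \<theta> i (mono u) = csc (ph \<theta> i u) (mono u)"
  by (simp add: shift_def mono_def fun_eq_iff)
lemma shift_add: "shift \<theta> i (p + q) = shift \<theta> i p + shift \<theta> i q" by (simp add: shift_def fun_eq_iff algebra_simps)
lemma shift_diff: "shift \<theta> i (p - q) = shift \<theta> i p - shift \<theta> i q" by (simp add: shift_def fun_eq_iff algebra_simps)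
lemma shift_neg: "shift \<theta> i (- p) = - shift \<theta> i p" by (simp add: shift_def fun_eq_iff)
lemma shift_csc: "shift \<theta> i (csc c p) = csc c (shift \<theta> i p)" by (simp add: shift_def fun_eq_iff)
lemma shift_zero: "shift \<theta> i 0 = 0" by (simp add: shift_def fun_eq_iff)
lemma shift_cst: "shift \<theta> i (cst c) = cst c" by (simp add: shift_def cst_def ph_def fun_eq_iff)
lemma shift_sum: "shift \<theta> i (\<Sum>j\<in>A. F j) = (\<Sum>j\<in>A. shift \<theta> i (F j))"
  by (induction A rule: infinite_finite_induct) (simp_all only: sum.insert sum.empty sum.infinite not_False_eq_True shift_zero shift_add)

lemma shift_fmul: "shift \<theta> i (fmul p q) = fmul (shift \<theta> i p) (shift \<theta> i q)"
proof (rule ext)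
  fix w
  show "shift \<theta> i (fmul p q) w = fmul (shift \<theta> i p) (shift \<theta> i q) w"
    unfolding shift_def fmul_def
    by (subst sum_distrib_left, rule sum.cong, simp,
        metis (no_types, lifting) append_take_drop_id mult.assoc mult.left_commute ph_append)
qed



definition pr :: "nat \<Rightarrow> nat" where "pr a = (a + 1) mod 4 + 1"

lemma four_cases: "a \<in> {1..4::nat} \<Longrightarrow> a = 1 \<or> a = 2 \<or> a = 3 \<or> a = 4" by auto

lemma pr_simps[simp]: "pr (Suc 0) = 3" "pr 1 = 3" "pr 2 = 4" "pr 3 = 1" "pr 4 = 2" by (simp_all add: pr_def)
lemma pr_range: "a \<in> {1..4} \<Longrightarrow> pr a \<in> {1..4}" using four_cases[of a] by auto
lemma pr_pr: "a \<in> {1..4} \<Longrightarrow> pr (pr a) = a" using four_cases[of a] by auto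

lemma ee: "exp (\<i> * complex_of_real \<theta>) * exp (- (\<i> * complex_of_real \<theta>)) = 1"
  by (simp add: exp_add[symmetric])
lemma ee': "exp (- (\<i> * complex_of_real \<theta>)) * exp (\<i> * complex_of_real \<theta>) = 1"
  by (simp add: exp_add[symmetric])

lemma R_diag: "a \<in> {1..4} \<Longrightarrow> Rm \<theta> a a = 1"
  using four_cases[of a] by (auto simp: Rm_def Let_def)
lemma R_inv: "a \<in> {1..4} \<Longrightarrow> b \<in> {1..4} \<Longrightarrow> Rm \<theta> a b * Rm \<theta> b a = 1"
  using four_cases[of a] four_cases[of b] by (auto simp: Rm_def Let_def ee ee')
lemma R_row: "a \<in> {1..4} \<Longrightarrow> b \<in> {1..4} \<Longrightarrow> Rm \<theta> a b * Rm \<theta> (pr a) b = 1"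
  using four_cases[of a] four_cases[of b] by (auto simp: Rm_def Let_def ee ee')
lemma R_col: "a \<in> {1..4} \<Longrightarrow> b \<in> {1..4} \<Longrightarrow> Rm \<theta> a b * Rm \<theta> a (pr b) = 1"
  using four_cases[of a] four_cases[of b] by (auto simp: Rm_def Let_def ee ee')
lemma R_prsym: "a \<in> {1..4} \<Longrightarrow> b \<in> {1..4} \<Longrightarrow> Rm \<theta> (pr b) a = Rm \<theta> a b"
  using four_cases[of a] four_cases[of b] by (auto simp: Rm_def Let_def ee ee')
lemma R_13: "Rm \<theta> (Suc 0) 3 = 1" "Rm \<theta> 3 (Suc 0) = 1" "Rm \<theta> 1 3 = 1" "Rm \<theta> 3 1 = 1" "Rm \<theta> 2 4 = 1" "Rm \<theta> 4 2 = 1"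
  by (auto simp: Rm_def Let_def)

lemma ph_pr: "set w \<subseteq> {1..4} \<Longrightarrow> a \<in> {1..4} \<Longrightarrow> ph \<theta> a w * ph \<theta> (pr a) w = 1"
proof (induction w)
  case Nil then show ?case by (simp add: ph_def)
next
  case (Cons x w)
  have "ph \<theta> a (x # w) * ph \<theta> (pr a) (x # w) = (Rm \<theta> x a * Rm \<theta> x (pr a)) * (ph \<theta> a w * ph \<theta> (pr a) w)"
    by (simp add: ph_def mult_ac)
  then show ?case using Cons R_col[of x a \<theta>] by simp
qed

lemma four_set: "{1..4::nat} = {1,2,3,4}" by auto

lemma Pm_pr: "a \<in> {1..4} \<Longrightarrow> Pm a b = (if b = pr a then 1 else 0)"
  using four_cases[of a] by (auto simp: Pm_def)

lemma sum4: "(\<Sum>i\<in>{1..4::nat}. F i) = F 1 + F 2 + F 3 + F 4"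
  by (simp only: four_set) (simp add: add_ac)

lemma nu_pr: "j \<in> {1..4} \<Longrightarrow> nu j = csc (1/2) (gen (pr j))"
  unfolding nu_def sum4
  using four_cases[of j] by (auto simp: gmat_def Pm_def csc_zero)

lemma shift_gen: "shift \<theta> a (gen c) = csc (Rm \<theta> c a) (gen c)"
  by (simp add: gen_def shift_mono ph_def)

lemma shift_nu: "a \<in> {1..4} \<Longrightarrow> b \<in> {1..4} \<Longrightarrow> shift \<theta> a (nu b) = csc (Rm \<theta> a b) (nu b)"
  by (simp add: nu_pr shift_csc shift_gen csc_csc R_prsym mult.commute)

lemma Pm_sum: "a \<in> {1..4} \<Longrightarrow> (\<Sum>j\<in>{1..4}. csc (2 * Pm a j) (X j)) = csc 2 (X (pr a))"
  unfolding sum4 using four_cases[of a] by (auto simp: Pm_def csc_zero)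

lemma ginv_tens: "ginv (tens \<theta> \<alpha> \<beta>) = (\<Sum>a\<in>{1..4}. csc 2 (fmul (\<alpha> a) (shift \<theta> a (\<beta> (pr a)))))"
  unfolding ginv_def tens_def ginvmat_def
  by (rule sum.cong, simp, rule Pm_sum)



lemma ig_neg: "x \<in> ideal_gen G \<Longrightarrow> - x \<in> ideal_gen G"
  using ig_smult[of x G "-1"] by (simp add: csc_m1)
lemma ig_diff: "x \<in> ideal_gen G \<Longrightarrow> y \<in> ideal_gen G \<Longrightarrow> x - y \<in> ideal_gen G"
  using ig_add[OF _ ig_neg] by (metis diff_conv_add_uminus)
lemma ig_sum: "(\<And>i. i \<in> A \<Longrightarrow> F i \<in> ideal_gen G) \<Longrightarrow> (\<Sum>i\<in>A. F i) \<in> ideal_gen G"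
  by (induction A rule: infinite_finite_induct) (auto intro: ig_zero ig_add)
lemma ig_mono: assumes "G \<subseteq> H" "x \<in> ideal_gen G" shows "x \<in> ideal_gen H"
  using assms(2) by induction (blast intro: ideal_gen.intros assms(1)[THEN subsetD])+
lemma IA_IB: "x \<in> IA \<theta> \<Longrightarrow> x \<in> IB \<theta>"
  unfolding IA_def IB_def by (rule ig_mono[of "rels \<theta>"]) auto

lemma mono_nil: "mono [] = cst 1" by (simp add: cst_mono csc_one)

lemma mult_mono_mem: "x \<in> ideal_gen G \<Longrightarrow> set u \<subseteq> {1..4} \<Longrightarrow> set v \<subseteq> {1..4} \<Longrightarrow>
   fmul (mono u) (fmul x (mono v)) \<in> ideal_gen G" by (rule ig_mult)

lemma swap_mem: "set u \<subseteq> {1..4} \<Longrightarrow> set v \<subseteq> {1..4} \<Longrightarrow> a \<in> {1..4} \<Longrightarrow> b \<in> {1..4} \<Longrightarrow>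
  mono (u @ a # b # v) - csc (Rm \<theta> b a) (mono (u @ b # a # v)) \<in> IA \<theta>"
proof -
  assume h: "set u \<subseteq> {1..4}" "set v \<subseteq> {1..4}" "a \<in> {1..4}" "b \<in> {1..4}"
  have r: "fmul (gen a) (gen b) - csc (Rm \<theta> b a) (fmul (gen b) (gen a)) \<in> IA \<theta>"
    unfolding IA_def by (rule ig_gen) (use h in \<open>unfold rels_def, blast\<close>)
  have "fmul (mono u) (fmul (fmul (gen a) (gen b) - csc (Rm \<theta> b a) (fmul (gen b) (gen a))) (mono v)) \<in> IA \<theta>"
    unfolding IA_def by (rule ig_mult[OF r[unfolded IA_def] h(1,2)])
  then show ?thesis
    by (simp add: fmul_diff_left fmul_diff_right fmul_csc_left fmul_csc_right gen_def fmul_mono)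
qed

lemma f_mem: "set u \<subseteq> {1..4} \<Longrightarrow> set v \<subseteq> {1..4} \<Longrightarrow>
  mono (u @ 1 # 3 # v) + mono (u @ 2 # 4 # v) - mono (u @ v) \<in> IB \<theta>"
proof -
  assume h: "set u \<subseteq> {1..4}" "set v \<subseteq> {1..4}"
  have r: "f_el \<in> IB \<theta>" unfolding IB_def by (rule ig_gen) simp
  have "csc 2 (fmul (mono u) (fmul f_el (mono v))) \<in> IB \<theta>"
    unfolding IB_def by (rule ig_smult, rule ig_mult[OF r[unfolded IB_def] h(1,2)])
  then show ?thesis
    by (simp add: f_el_def fmul_diff_left fmul_diff_right fmul_add_left fmul_add_right fmul_csc_left fmul_csc_right
        gen_def fmul_mono csc_csc csc_add csc_diff csc_one cst_mono)
qed

lemma comm_mem: "set w \<subseteq> {1..4} \<Longrightarrow> c \<in> {1..4} \<Longrightarrow>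
   mono (c # w) - csc (ph \<theta> c w) (mono (w @ [c])) \<in> IA \<theta>"
proof (induction w)
  case Nil
  have eq: "mono [c] - csc (ph \<theta> c []) (mono ([] @ [c])) = 0" by (simp add: ph_def csc_one)
  show ?case unfolding IA_def by (subst eq) (rule ideal_gen.ig_zero)
next
  case (Cons x w)
  have s: "mono (c # x # w) - csc (Rm \<theta> x c) (mono (x # c # w)) \<in> IA \<theta>"
    using swap_mem[of "[]" w c x \<theta>] Cons.prems by auto
  have "fmul (mono [x]) (fmul (mono (c # w) - csc (ph \<theta> c w) (mono (w @ [c]))) (mono [])) \<in> IA \<theta>"
  proof -
    have ih: "mono (c # w) - csc (ph \<theta> c w) (mono (w @ [c])) \<in> IA \<theta>"
      by (intro Cons.IH) (use Cons.prems in auto)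
    show ?thesis unfolding IA_def by (rule ig_mult[OF ih[unfolded IA_def]]) (use Cons.prems in auto)
  qed
  then have t: "mono (x # c # w) - csc (ph \<theta> c w) (mono (x # w @ [c])) \<in> IA \<theta>"
    by (simp add: fmul_diff_left fmul_diff_right fmul_csc_left fmul_csc_right fmul_mono)
  have "mono (c # x # w) - csc (ph \<theta> c (x # w)) (mono ((x # w) @ [c])) =
     (mono (c # x # w) - csc (Rm \<theta> x c) (mono (x # c # w))) + csc (Rm \<theta> x c) (mono (x # c # w) - csc (ph \<theta> c w) (mono (x # w @ [c])))"
    by (simp add: csc_diff csc_csc ph_def)
  then show ?case using s t unfolding IA_def by (metis ig_add ig_smult)
qed

lemma poly_rep: "poly_fa p \<Longrightarrow> p = (\<Sum>w\<in>{w. p w \<noteq> 0}. csc (p w) (mono w))"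
proof (rule ext)
  fix x assume p: "poly_fa p"
  have fin: "finite {w. p w \<noteq> 0}" using p by (simp add: poly_fa_def)
  have "(\<Sum>w\<in>{w. p w \<noteq> 0}. csc (p w) (mono w)) x = (\<Sum>w\<in>{w. p w \<noteq> 0}. if x = w then p w else 0)"
    by (auto simp: sumf_apply mono_apply intro!: sum.cong)
  also have "\<dots> = p x" by (subst sum.delta'[OF fin]) auto
  finally show "p x = (\<Sum>w\<in>{w. p w \<noteq> 0}. csc (p w) (mono w)) x" by simp
qed

lemma comm_poly: "poly_fa p \<Longrightarrow> a \<in> {1..4} \<Longrightarrow>
   fmul (gen (pr a)) (shift \<theta> a p) - fmul p (gen (pr a)) \<in> IA \<theta>"
proof -
  assume p: "poly_fa p" and a: "a \<in> {1..4}"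
  define S where "S = {w. p w \<noteq> 0}"
  have pr: "p = (\<Sum>w\<in>S. csc (p w) (mono w))" using poly_rep[OF p] S_def by simp
  have Sw: "\<And>w. w \<in> S \<Longrightarrow> set w \<subseteq> {1..4}" using p by (auto simp: S_def poly_fa_def)
  have "fmul (gen (pr a)) (shift \<theta> a p) - fmul p (gen (pr a)) =
     (\<Sum>w\<in>S. csc (p w * ph \<theta> a w) (mono (pr a # w) - csc (ph \<theta> (pr a) w) (mono (w @ [pr a]))))"
  proof -
    have "fmul (gen (pr a)) (shift \<theta> a p) - fmul p (gen (pr a)) =
      (\<Sum>w\<in>S. csc (p w * ph \<theta> a w) (mono (pr a # w)) - csc (p w) (mono (w @ [pr a])))"
      by (subst (1 2) pr) (simp add: shift_sum fmul_sum_left fmul_sum_right shift_csc shift_mono fmul_csc_left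
           fmul_csc_right csc_csc gen_def fmul_mono sum_subtractf mult.commute)
    also have "\<dots> = (\<Sum>w\<in>S. csc (p w * ph \<theta> a w) (mono (pr a # w) - csc (ph \<theta> (pr a) w) (mono (w @ [pr a]))))"
      apply (rule sum.cong, simp)
      using ph_pr[OF Sw a] by (simp add: csc_diff csc_csc mult.assoc)
    finally show ?thesis .
  qed
  also have "\<dots> \<in> IA \<theta>" unfolding IA_def
    apply (rule ig_sum, rule ig_smult)
    using comm_mem[OF Sw pr_range[OF a]] by (simp add: IA_def)
  finally show ?thesis .
qed



lemma IA_csc: "x \<in> IA \<theta> \<Longrightarrow> csc c x \<in> IA \<theta>" unfolding IA_def by (rule ig_smult)

lemma part1a: assumes "polyO \<omega>" shows "eqTA \<theta> (sigma \<theta> (tens \<theta> \<omega> nu)) (tens \<theta> nu \<omega>)"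
  unfolding eqTA_def
proof (intro ballI)
  fix a b :: nat assume a: "a \<in> {1..4}" and b: "b \<in> {1..4}"
  have p: "poly_fa (\<omega> b)" using assms b by (simp add: polyO_def)
  have "sigma \<theta> (tens \<theta> \<omega> nu) a b - tens \<theta> nu \<omega> a b =
     csc (- 1/2) (fmul (gen (pr a)) (shift \<theta> a (\<omega> b)) - fmul (\<omega> b) (gen (pr a)))"
    using a b R_row[OF a b, of \<theta>]
    by (simp add: sigma_def tens_def shift_gen nu_pr fmul_csc_left fmul_csc_right csc_csc csc_diff
        shift_csc fun_eq_iff algebra_simps)
  also have "\<dots> \<in> IA \<theta>" by (rule IA_csc, rule comm_poly[OF p a])
  finally show "eqA \<theta> (sigma \<theta> (tens \<theta> \<omega> nu) a b) (tens \<theta> nu \<omega> a b)" by (simp add: eqA_def)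
qed

lemma part1b: assumes "polyO \<omega>" shows "eqTA \<theta> (sigma \<theta> (tens \<theta> nu \<omega>)) (tens \<theta> \<omega> nu)"
  unfolding eqTA_def
proof (intro ballI)
  fix a b :: nat assume a: "a \<in> {1..4}" and b: "b \<in> {1..4}"
  have p: "poly_fa (\<omega> a)" using assms a by (simp add: polyO_def)
  have "sigma \<theta> (tens \<theta> nu \<omega>) a b - tens \<theta> \<omega> nu a b =
     csc (Rm \<theta> a b / 2) (fmul (gen (pr b)) (shift \<theta> b (\<omega> a)) - fmul (\<omega> a) (gen (pr b)))"
    using a b R_prsym[OF a b, of \<theta>]
    by (simp add: sigma_def tens_def shift_gen nu_pr fmul_csc_left fmul_csc_right csc_csc csc_diff
        shift_csc fun_eq_iff algebra_simps)
  also have "\<dots> \<in> IA \<theta>" by (rule IA_csc, rule comm_poly[OF p b])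
  finally show "eqA \<theta> (sigma \<theta> (tens \<theta> nu \<omega>) a b) (tens \<theta> \<omega> nu a b)" by (simp add: eqA_def)
qed

lemma dz_app: "dz i a = (if a = i then cst 1 else 0)" by (simp add: dz_def)

lemma Pi_dz: "i \<in> {1..4} \<Longrightarrow> Pi \<theta> (dz i) = dz i - lsc (gen i) nu"
proof -
  assume i: "i \<in> {1..4}"
  have "ginv (tens \<theta> (dz i) nu) = gen i"
    unfolding ginv_tens sum4 using four_cases[OF i]
    by (auto simp: dz_app fmul_zero_left fmul_one_left csc_zero2 nu_pr shift_csc shift_gen R_diag csc_csc csc_one)
  then show ?thesis by (simp add: Pi_def)
qed

lemma sum2_apply: "(\<Sum>i\<in>A. F i) a b = (\<Sum>i\<in>A. F i a b)"
  by (simp add: sumf_apply)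

lemma PiL_app: assumes a: "a \<in> {1..4}" and b: "b \<in> {1..4}"
  shows "PiL \<theta> T a b = T a b - (\<Sum>i\<in>{1..4}. fmul (T i b) (fmul (gen i) (nu a)))"
proof -
  have "PiL \<theta> T a b = (\<Sum>i\<in>{1..4}. \<Sum>j\<in>{1..4}. fmul (T i j) (fmul (Pi \<theta> (dz i) a) (shift \<theta> a (dz j b))))"
    unfolding PiL_def by (simp add: sum2_apply tlsc_def tens_def)
  also have "\<dots> = (\<Sum>i\<in>{1..4}. fmul (T i b) (Pi \<theta> (dz i) a))"
  proof (rule sum.cong, simp)
    fix i :: nat assume "i \<in> {1..4}"
    have "(\<Sum>j\<in>{1..4}. fmul (T i j) (fmul (Pi \<theta> (dz i) a) (shift \<theta> a (dz j b)))) =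
          (\<Sum>j\<in>{1..4}. if b = j then fmul (T i b) (Pi \<theta> (dz i) a) else 0)"
      by (rule sum.cong) (auto simp: dz_app shift_cst shift_zero fmul_one_right fmul_zero_right)
    also have "\<dots> = fmul (T i b) (Pi \<theta> (dz i) a)" using b by (simp add: sum.delta)
    finally show "(\<Sum>j\<in>{1..4}. fmul (T i j) (fmul (Pi \<theta> (dz i) a) (shift \<theta> a (dz j b)))) = fmul (T i b) (Pi \<theta> (dz i) a)" .
  qed
  also have "\<dots> = (\<Sum>i\<in>{1..4}. (if a = i then T a b else 0) - fmul (T i b) (fmul (gen i) (nu a)))"
    by (rule sum.cong) (auto simp: Pi_dz dz_app lsc_def fmul_diff_right fmul_one_right fmul_zero_right)
  also have "\<dots> = T a b - (\<Sum>i\<in>{1..4}. fmul (T i b) (fmul (gen i) (nu a)))"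
    using a by (simp add: sum_subtractf sum.delta)
  finally show ?thesis .
qed

lemma PiR_app: assumes a: "a \<in> {1..4}" and b: "b \<in> {1..4}"
  shows "PiR \<theta> S a b = S a b - (\<Sum>j\<in>{1..4}. csc (Rm \<theta> j a * Rm \<theta> a b) (fmul (S a j) (fmul (gen j) (nu b))))"
proof -
  have "PiR \<theta> S a b = (\<Sum>i\<in>{1..4}. \<Sum>j\<in>{1..4}. fmul (S i j) (fmul (dz i a) (shift \<theta> a (Pi \<theta> (dz j) b))))"
    unfolding PiR_def by (simp add: sum2_apply tlsc_def tens_def)
  also have "\<dots> = (\<Sum>i\<in>{1..4}. if a = i then (\<Sum>j\<in>{1..4}. fmul (S a j) (shift \<theta> a (Pi \<theta> (dz j) b))) else 0)"
    by (rule sum.cong) (auto simp: dz_app fmul_one_left fmul_zero_left fmul_zero_right)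
  also have "\<dots> = (\<Sum>j\<in>{1..4}. fmul (S a j) (shift \<theta> a (Pi \<theta> (dz j) b)))"
    using a by (simp add: sum.delta)
  also have "\<dots> = (\<Sum>j\<in>{1..4}. (if b = j then S a b else 0) - csc (Rm \<theta> j a * Rm \<theta> a b) (fmul (S a j) (fmul (gen j) (nu b))))"
    by (rule sum.cong) (use a b in \<open>auto simp: Pi_dz dz_app lsc_def fmul_diff_right fmul_one_right fmul_zero_right
        shift_diff shift_cst shift_zero shift_fmul shift_gen shift_nu fmul_csc_left fmul_csc_right csc_csc\<close>)
  also have "\<dots> = S a b - (\<Sum>j\<in>{1..4}. csc (Rm \<theta> j a * Rm \<theta> a b) (fmul (S a j) (fmul (gen j) (nu b))))"
    using b by (simp add: sum_subtractf sum.delta)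
  finally show ?thesis .
qed



lemma eqTQ_exact: assumes "\<And>a b. a \<in> {1..4} \<Longrightarrow> b \<in> {1..4} \<Longrightarrow> S a b = T a b"
  shows "eqTQ \<theta> S T"
proof -
  have "eqTA \<theta> (S - T) 0" unfolding eqTA_def eqA_def
  proof (intro ballI)
    fix a b assume "a \<in> {1..4::nat}" "b \<in> {1..4::nat}"
    then have "(S - T) a b - (0::form2) a b = 0" using assms by simp
    then show "(S - T) a b - (0::form2) a b \<in> IA \<theta>" unfolding IA_def by (simp only: ideal_gen.ig_zero)
  qed
  then show ?thesis unfolding eqTQ_def by (rule KQ.kq_eq[OF KQ.kq_zero])
qed

lemma part2a: "eqTQ \<theta> (sigma \<theta> (PiL \<theta> T)) (PiR \<theta> (sigma \<theta> T))"
proof (rule eqTQ_exact)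
  fix a b :: nat assume a: "a \<in> {1..4}" and b: "b \<in> {1..4}"
  have c: "\<And>j. j \<in> {1..4} \<Longrightarrow> Rm \<theta> j a * Rm \<theta> a b * Rm \<theta> a j = Rm \<theta> a b"
    using R_inv a by (metis mult.commute mult.left_commute mult.right_neutral)
  have "PiR \<theta> (sigma \<theta> T) a b = csc (Rm \<theta> a b) (T b a) -
      (\<Sum>j\<in>{1..4}. csc (Rm \<theta> a b) (fmul (T j a) (fmul (gen j) (nu b))))"
    unfolding PiR_app[OF a b]
    apply (simp add: sigma_def fmul_csc_left csc_csc)
    apply (rule sum.cong, simp)
    by (subst c) auto
  also have "\<dots> = sigma \<theta> (PiL \<theta> T) a b"
    by (simp add: sigma_def PiL_app[OF b a] csc_diff csc_sum)
  finally show "sigma \<theta> (PiL \<theta> T) a b = PiR \<theta> (sigma \<theta> T) a b" by simp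
qed

lemma part2b: "eqTQ \<theta> (sigma \<theta> (PiR \<theta> T)) (PiL \<theta> (sigma \<theta> T))"
proof (rule eqTQ_exact)
  fix a b :: nat assume a: "a \<in> {1..4}" and b: "b \<in> {1..4}"
  have c: "\<And>j. j \<in> {1..4} \<Longrightarrow> Rm \<theta> a b * (Rm \<theta> j b * Rm \<theta> b a) = Rm \<theta> j b"
    using R_inv[OF a b] by (metis mult.commute mult.left_commute mult.right_neutral)
  have "sigma \<theta> (PiR \<theta> T) a b = csc (Rm \<theta> a b) (T b a) -
      (\<Sum>j\<in>{1..4}. csc (Rm \<theta> j b) (fmul (T b j) (fmul (gen j) (nu a))))"
    unfolding sigma_def PiR_app[OF b a]
    apply (simp add: csc_diff csc_sum csc_csc)
    apply (rule sum.cong, simp)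
    by (subst c) auto
  also have "\<dots> = PiL \<theta> (sigma \<theta> T) a b"
    by (simp add: sigma_def PiL_app[OF a b] fmul_csc_left)
  finally show "sigma \<theta> (PiR \<theta> T) a b = PiL \<theta> (sigma \<theta> T) a b" by simp
qed



lemma IB_add: "x \<in> IB \<theta> \<Longrightarrow> y \<in> IB \<theta> \<Longrightarrow> x + y \<in> IB \<theta>" unfolding IB_def by (rule ig_add)
lemma IB_diff: "x \<in> IB \<theta> \<Longrightarrow> y \<in> IB \<theta> \<Longrightarrow> x - y \<in> IB \<theta>" unfolding IB_def by (rule ig_diff)
lemma IB_csc: "x \<in> IB \<theta> \<Longrightarrow> csc c x \<in> IB \<theta>" unfolding IB_def by (rule ig_smult)
lemma IB_sum: "(\<And>i. i \<in> A \<Longrightarrow> F i \<in> IB \<theta>) \<Longrightarrow> (\<Sum>i\<in>A. F i) \<in> IB \<theta>" unfolding IB_def by (rule ig_sum)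

lemma Pi_dz_app: "i \<in> {1..4} \<Longrightarrow> a \<in> {1..4} \<Longrightarrow> Pi \<theta> (dz i) a = dz i a - csc (1/2) (mono [i, pr a])"
  by (simp add: Pi_dz lsc_def nu_pr fmul_csc_right gen_def fmul_mono)

lemma summand: assumes i: "i \<in> {1..4}" and j: "j \<in> {1..4}" and a: "a \<in> {1..4}"
  shows "csc 2 (fmul (Pi \<theta> (dz i) a) (shift \<theta> a (Pi \<theta> (dz j) (pr a)))) =
    (if a = i \<and> pr a = j then cst 2 else 0) - (if a = i then csc (Rm \<theta> j a) (mono [j, a]) else 0)
     - (if pr a = j then mono [i, pr a] else 0) + csc (Rm \<theta> j a / 2) (mono [i, pr a, j, a])"
proof -
  have e1: "Pi \<theta> (dz i) a = dz i a - csc (1/2) (mono [i, pr a])" by (rule Pi_dz_app[OF i a])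
  have e2: "Pi \<theta> (dz j) (pr a) = dz j (pr a) - csc (1/2) (mono [j, a])"
    using Pi_dz_app[OF j pr_range[OF a], of \<theta>] pr_pr[OF a] by simp
  have sh: "shift \<theta> a (mono [j, a]) = csc (Rm \<theta> j a) (mono [j, a])"
    using R_diag[OF a, of \<theta>] by (simp add: shift_mono ph_def)
  have c2: "csc 2 (cst 1) = cst 2" by (simp add: cst_def fun_eq_iff)
  show ?thesis
    unfolding e1 e2
    by (simp add: dz_app shift_diff shift_cst shift_zero shift_csc sh
      fmul_diff_left fmul_diff_right fmul_csc_left fmul_csc_right fmul_one_left fmul_one_right
      fmul_zero_left fmul_zero_right fmul_mono csc_diff csc_add csc_one csc_csc csc_zero2 c2 algebra_simps)
qed


lemma ginv_PiPi: assumes i: "i \<in> {1..4}" and j: "j \<in> {1..4}"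
  shows "ginv (tens \<theta> (Pi \<theta> (dz i)) (Pi \<theta> (dz j))) =
    cst (ginvmat i j) - csc (Rm \<theta> j i) (mono [j, i]) - mono [i, j] + (\<Sum>a\<in>{1..4}. csc (Rm \<theta> j a / 2) (mono [i, pr a, j, a]))"
proof -
  have "ginv (tens \<theta> (Pi \<theta> (dz i)) (Pi \<theta> (dz j))) = (\<Sum>a\<in>{1..4}.
    (if a = i \<and> pr a = j then cst 2 else 0) - (if a = i then csc (Rm \<theta> j a) (mono [j, a]) else 0)
     - (if pr a = j then mono [i, pr a] else 0) + csc (Rm \<theta> j a / 2) (mono [i, pr a, j, a]))"
    unfolding ginv_tens by (rule sum.cong, simp, rule summand[OF i j]) simp
  also have "\<dots> = (\<Sum>a\<in>{1..4}. (if a = i \<and> pr a = j then cst 2 else 0)) - (\<Sum>a\<in>{1..4}. (if a = i then csc (Rm \<theta> j a) (mono [j, a]) else 0))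
     - (\<Sum>a\<in>{1..4}. (if pr a = j then mono [i, pr a] else 0)) + (\<Sum>a\<in>{1..4}. csc (Rm \<theta> j a / 2) (mono [i, pr a, j, a]))"
    by (simp add: sum.distrib sum_subtractf)
  also have "(\<Sum>a\<in>{1..4}. (if a = i \<and> pr a = j then cst 2 else 0)) = cst (ginvmat i j)"
  proof -
    have "(\<Sum>a\<in>{1..4}. (if a = i \<and> pr a = j then cst 2 else 0)) = (\<Sum>a\<in>{1..4}. (if a = i then (if pr i = j then cst 2 else 0) else 0))"
      by (rule sum.cong) auto
    also have "\<dots> = (if pr i = j then cst 2 else 0)" using i by (simp add: sum.delta')
    also have "\<dots> = cst (ginvmat i j)" using i by (auto simp: ginvmat_def Pm_pr cst_def fun_eq_iff)
    finally show ?thesis .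
  qed
  also have "(\<Sum>a\<in>{1..4}. (if a = i then csc (Rm \<theta> j a) (mono [j, a]) else 0)) = csc (Rm \<theta> j i) (mono [j, i])"
    using i by (simp add: sum.delta')
  also have "(\<Sum>a\<in>{1..4}. (if pr a = j then mono [i, pr a] else 0)) = mono [i, j]"
  proof -
    have "(\<Sum>a\<in>{1..4}. (if pr a = j then mono [i, pr a] else 0)) = (\<Sum>a\<in>{1..4}. (if a = pr j then mono [i, j] else 0))"
      by (rule sum.cong) (use j pr_pr in auto)
    also have "\<dots> = mono [i, j]" using pr_range[OF j] by (simp add: sum.delta')
    finally show ?thesis .
  qed
  finally show ?thesis .
qed

lemma part4: assumes i: "i \<in> {1..4}" and j: "j \<in> {1..4}"
  shows "eqB \<theta> (ginv (tens \<theta> (Pi \<theta> (dz i)) (Pi \<theta> (dz j)))) (cst (ginvmat i j) - fmul (gen i) (gen j))"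
proof -
  define X1 where "X1 = mono [i, j] - csc (Rm \<theta> j i) (mono [j, i])"
  define X2 where "X2 = (\<Sum>a\<in>{1..4}. csc (Rm \<theta> j a / 2) (mono ([i] @ pr a # j # [a]) - csc (Rm \<theta> j (pr a)) (mono ([i] @ j # pr a # [a]))))"
  define X3 where "X3 = csc (1/2) (mono ([i, j] @ 3 # 1 # []) - csc (Rm \<theta> 1 3) (mono ([i, j] @ 1 # 3 # [])))"
  define X4 where "X4 = csc (1/2) (mono ([i, j] @ 4 # 2 # []) - csc (Rm \<theta> 2 4) (mono ([i, j] @ 2 # 4 # [])))"
  define X5 where "X5 = mono ([i, j] @ 1 # 3 # []) + mono ([i, j] @ 2 # 4 # []) - mono ([i, j] @ [])"
  have m1: "X1 \<in> IB \<theta>" unfolding X1_def using swap_mem[of "[]" "[]" i j \<theta>] i j by (auto intro: IA_IB)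
  have m2: "X2 \<in> IB \<theta>" unfolding X2_def
    by (rule IB_sum, rule IB_csc, rule IA_IB, rule swap_mem) (use i j pr_range in auto)
  have m3: "X3 \<in> IB \<theta>" unfolding X3_def
    by (rule IB_csc, rule IA_IB, rule swap_mem) (use i j in auto)
  have m4: "X4 \<in> IB \<theta>" unfolding X4_def
    by (rule IB_csc, rule IA_IB, rule swap_mem) (use i j in auto)
  have m5: "X5 \<in> IB \<theta>" unfolding X5_def
    by (rule f_mem) (use i j in auto)
  have x2: "X2 = (\<Sum>a\<in>{1..4}. csc (Rm \<theta> j a / 2) (mono [i, pr a, j, a])) -
      csc (1/2) (mono [i, j, 3, 1] + mono [i, j, 4, 2] + mono [i, j, 1, 3] + mono [i, j, 2, 4])"
  proof -
    have "X2 = (\<Sum>a\<in>{1..4}. csc (Rm \<theta> j a / 2) (mono [i, pr a, j, a])) - (\<Sum>a\<in>{1..4}. csc (1/2) (mono [i, j, pr a, a]))"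
      unfolding X2_def sum_subtractf[symmetric]
      by (rule sum.cong, simp) (use R_col[OF j] in \<open>simp add: csc_diff csc_csc\<close>)
    then show ?thesis by (simp only: sum4) (simp add: csc_add algebra_simps)
  qed
  have "ginv (tens \<theta> (Pi \<theta> (dz i)) (Pi \<theta> (dz j))) - (cst (ginvmat i j) - fmul (gen i) (gen j)) =
     X1 + X2 + X3 + X4 + X5"
    unfolding ginv_PiPi[OF i j] x2 unfolding X1_def X3_def X4_def X5_def
    by (simp add: gen_def fmul_mono R_13 csc_one fun_eq_iff algebra_simps)
  also have "\<dots> \<in> IB \<theta>" by (intro IB_add m1 m2 m3 m4 m5)
  finally show ?thesis by (simp add: eqB_def)
qed



lemma eqTB_via: assumes "X \<in> KB \<theta>" and "\<And>a b. a \<in> {1..4} \<Longrightarrow> b \<in> {1..4} \<Longrightarrow> S a b - T a b = X a b"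
  shows "eqTB \<theta> S T"
proof -
  have "eqTA \<theta> (S - T) X" unfolding eqTA_def eqA_def
  proof (intro ballI)
    fix a b assume "a \<in> {1..4::nat}" "b \<in> {1..4::nat}"
    then have "(S - T) a b - X a b = 0" using assms(2) by simp
    then show "(S - T) a b - X a b \<in> IA \<theta>" unfolding IA_def by (simp only: ideal_gen.ig_zero)
  qed
  then show ?thesis unfolding eqTB_def by (rule KB.kb_eq[OF assms(1)])
qed

lemma eqTB_exact: assumes "\<And>a b. a \<in> {1..4} \<Longrightarrow> b \<in> {1..4} \<Longrightarrow> S a b = T a b"
  shows "eqTB \<theta> S T"
  by (rule eqTB_via[OF KB.kb_zero]) (simp add: assms)

lemma tens_dz: "tens \<theta> (dz i) (dz j) a b = (if a = i \<and> b = j then cst 1 else 0)"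
  by (simp add: tens_def dz_app shift_cst shift_zero fmul_one_left fmul_zero_left fmul_zero_right)

lemma G_app: assumes a: "a \<in> {1..4}" and b: "b \<in> {1..4}"
  shows "(\<Sum>i\<in>{1..4}. \<Sum>j\<in>{1..4}. tlsc (cst (gmat i j)) (tens \<theta> (dz i) (dz j))) a b = cst (gmat a b)"
proof -
  have "(\<Sum>i\<in>{1..4}. \<Sum>j\<in>{1..4}. tlsc (cst (gmat i j)) (tens \<theta> (dz i) (dz j))) a b =
     (\<Sum>i\<in>{1..4}. \<Sum>j\<in>{1..4}. if i = a then (if j = b then cst (gmat a b) else 0) else 0)"
    apply (simp add: sum2_apply tlsc_def tens_dz)
    apply (intro sum.cong refl)
    by (auto simp: fmul_one_right fmul_zero_right)
  also have "\<dots> = cst (gmat a b)" unfolding sum4 using four_cases[OF a] four_cases[OF b] by auto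
  finally show ?thesis .
qed

lemma part3: "eqTB \<theta> gA (\<Sum>i\<in>{1..4}. \<Sum>j\<in>{1..4}. tlsc (cst (gmat i j)) (tens \<theta> (dz i) (dz j)))"
proof (rule eqTB_exact)
  fix a b :: nat assume a: "a \<in> {1..4}" and b: "b \<in> {1..4}"
  show "gA a b = (\<Sum>i\<in>{1..4}. \<Sum>j\<in>{1..4}. tlsc (cst (gmat i j)) (tens \<theta> (dz i) (dz j))) a b"
    using G_app[OF a b, of \<theta>] by (simp add: gA_def)
qed

lemma csc_cst1: "csc c (cst 1) = cst c" by (simp add: cst_def fun_eq_iff)

lemma part6: "eqTB \<theta> (sigma \<theta> (tens \<theta> (dz i) (dz j))) (tlsc (cst (Rm \<theta> j i)) (tens \<theta> (dz j) (dz i)))"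
  by (rule eqTB_exact) (auto simp: sigma_def tlsc_def tens_dz fmul_one_right fmul_zero_right csc_cst1 csc_zero2)



lemma dA_diff: "dA \<theta> (p - q) = dA \<theta> p - dA \<theta> q"
  by (simp add: dA_def fun_eq_iff left_diff_distrib sum_subtractf)
lemma dA_add: "dA \<theta> (p + q) = dA \<theta> p + dA \<theta> q"
  by (simp add: dA_def fun_eq_iff distrib_right sum.distrib)
lemma dA_csc: "dA \<theta> (csc c p) k = csc c (dA \<theta> p k)"
  by (simp add: dA_def fun_eq_iff sum_distrib_left mult.assoc)
lemma dA_zero: "dA \<theta> 0 = 0" by (simp add: dA_def fun_eq_iff)
lemma dA_cst: "dA \<theta> (cst c) = 0" by (simp add: dA_def cst_def fun_eq_iff)

lemma dA_mono2: "dA \<theta> (mono [x, y]) k =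
   (if k = x then csc (Rm \<theta> y x) (mono [y]) else 0) + (if k = y then mono [x] else 0)"
proof (rule ext)
  fix v :: "nat list"
  show "dA \<theta> (mono [x, y]) k v = ((if k = x then csc (Rm \<theta> y x) (mono [y]) else 0) + (if k = y then mono [x] else 0)) v"
  proof (cases v)
    case Nil then show ?thesis by (simp add: dA_def mono_def)
  next
    case (Cons c r)
    show ?thesis
    proof (cases r)
      case Nil
      then show ?thesis using \<open>v = c # r\<close> by (auto simp: dA_def mono_def ph_def)
    next
      case (Cons d r')
      have "\<And>m. mono [x, y] (take m v @ k # drop m v) = 0"
        unfolding mono_def using \<open>v = c # r\<close> Cons
        by (auto dest: arg_cong[of _ _ length])
      then show ?thesis using \<open>v = c # r\<close> Cons by (simp add: dA_def mono_def)
    qed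
  qed
qed


lemma fmul_cst_right: "fmul p (cst c) = csc c p"
proof -
  have "cst c = csc c (cst 1)" by (simp add: cst_def fun_eq_iff)
  then show ?thesis by (simp add: fmul_csc_right fmul_one_right)
qed

lemma poly_cst: "poly_fa (cst c)" by (simp add: poly_fa_def cst_def)
lemma poly_zero: "poly_fa 0" by (simp add: poly_fa_def)
lemma polyO_dz: "polyO (dz i)" by (simp add: polyO_def dz_app poly_cst poly_zero)

lemma negnu_NB: "(\<lambda>k. csc (-1) (nu k)) \<in> NB \<theta>"
proof -
  have f: "f_el \<in> IB \<theta>" unfolding IB_def by (rule ig_gen) simp
  have fe: "f_el = csc (1/2) (mono [1, 3] + mono [2, 4] - cst 1)"
    by (simp add: f_el_def gen_def fmul_mono)
  have "eqOA \<theta> (\<lambda>k. csc (-1) (nu k)) (\<lambda>k. csc (-1) (dA \<theta> f_el k))"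
    unfolding eqOA_def eqA_def
  proof (intro ballI)
    fix k :: nat assume k: "k \<in> {1..4}"
    have "csc (-1) (nu k) - csc (-1) (dA \<theta> f_el k) = 0"
      unfolding fe dA_csc dA_diff dA_add dA_cst
      using four_cases[OF k] by (auto simp: nu_pr dA_mono2 R_13 csc_one gen_def)
    then show "csc (-1) (nu k) - csc (-1) (dA \<theta> f_el k) \<in> IA \<theta>"
      unfolding IA_def by (simp only: ideal_gen.ig_zero)
  qed
  then show ?thesis by (rule NB.nb_eq[OF NB.nb_smult[OF NB.nb_d[OF f]]])
qed

lemma nabla_app: assumes a: "a \<in> {1..4}" and b: "b \<in> {1..4}"
  shows "nabla \<theta> \<omega> a b = dA \<theta> (\<omega> b) a"
proof -
  have "nabla \<theta> \<omega> a b = (\<Sum>k\<in>{1..4}. if k = b then dA \<theta> (\<omega> b) a else 0)"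
    unfolding nabla_def sum2_apply tens_def
    by (rule sum.cong) (auto simp: dz_app shift_cst shift_zero fmul_one_right fmul_zero_right)
  also have "\<dots> = dA \<theta> (\<omega> b) a" using b by (simp add: sum.delta)
  finally show ?thesis .
qed

lemma part5: assumes i: "i \<in> {1..4}"
  shows "eqTB \<theta> (nabla \<theta> (Pi \<theta> (dz i)))
          (tlsc (- gen i) (\<Sum>k\<in>{1..4}. \<Sum>l\<in>{1..4}. tlsc (cst (gmat k l)) (tens \<theta> (dz k) (dz l))))"
proof (rule eqTB_via[OF KB.kb_r[OF polyO_dz negnu_NB]])
  fix a b :: nat assume a: "a \<in> {1..4}" and b: "b \<in> {1..4}"
  have d0: "dA \<theta> (dz i b) = 0" by (simp add: dz_app dA_cst dA_zero)
  have L: "nabla \<theta> (Pi \<theta> (dz i)) a b = csc (-1/2) ((if a = i then csc (Rm \<theta> (pr b) i) (mono [pr b]) else 0) + (if a = pr b then mono [i] else 0))"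
    unfolding nabla_app[OF a b] Pi_dz_app[OF i b] dA_diff d0
    by (simp add: dA_csc dA_mono2 csc_neg csc_m1[symmetric] csc_csc)
  have g: "gmat a b = (if a = pr b then 1/2 else 0)"
    using a b pr_pr by (auto simp: gmat_def Pm_pr)
  have T: "tlsc (- gen i) (\<Sum>k\<in>{1..4}. \<Sum>l\<in>{1..4}. tlsc (cst (gmat k l)) (tens \<theta> (dz k) (dz l))) a b =
      - csc (gmat a b) (mono [i])"
  proof -
    have "\<And>G. tlsc (- gen i) G a b = fmul (- gen i) (G a b)" by (simp only: tlsc_def)
    then show ?thesis by (simp only: G_app[OF a b]) (simp add: fmul_cst_right csc_neg gen_def)
  qed
  have X: "tens \<theta> (dz i) (\<lambda>k. csc (- 1) (nu k)) a b = (if a = i then csc (- Rm \<theta> (pr b) i / 2) (mono [pr b]) else 0)"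
    using R_prsym[OF i b, of \<theta>]
    by (simp add: tens_def dz_app fmul_one_left fmul_zero_left shift_csc shift_mono ph_def nu_pr[OF b] csc_csc gen_def)
  show "nabla \<theta> (Pi \<theta> (dz i)) a b - tlsc (- gen i) (\<Sum>k\<in>{1..4}. \<Sum>l\<in>{1..4}. tlsc (cst (gmat k l)) (tens \<theta> (dz k) (dz l))) a b =
     tens \<theta> (dz i) (\<lambda>k. csc (- 1) (nu k)) a b"
    unfolding L T X g by (auto simp: csc_add csc_csc csc_zero csc_zero2 csc_neg fun_eq_iff)
qed


theorem proposition4p8:
  fixes \<theta> :: real
  shows
   "(\<forall>\<omega>. polyO \<omega> \<longrightarrow>
        eqTA \<theta> (sigma \<theta> (tens \<theta> \<omega> nu)) (tens \<theta> nu \<omega>) \<and>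
        eqTA \<theta> (sigma \<theta> (tens \<theta> nu \<omega>)) (tens \<theta> \<omega> nu))
  \<and> (\<forall>T. polyT T \<longrightarrow>
        eqTQ \<theta> (sigma \<theta> (PiL \<theta> T)) (PiR \<theta> (sigma \<theta> T)) \<and>
        eqTQ \<theta> (sigma \<theta> (PiR \<theta> T)) (PiL \<theta> (sigma \<theta> T)))
  \<and> eqTB \<theta> gA (\<Sum>i\<in>{1..4}. \<Sum>j\<in>{1..4}. tlsc (cst (gmat i j)) (tens \<theta> (dz i) (dz j)))
  \<and> (\<forall>i\<in>{1..4}. \<forall>j\<in>{1..4}.
        eqB \<theta> (ginv (tens \<theta> (Pi \<theta> (dz i)) (Pi \<theta> (dz j))))
               (cst (ginvmat i j) - fmul (gen i) (gen j)))
  \<and> (\<forall>i\<in>{1..4}.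
        eqTB \<theta> (nabla \<theta> (Pi \<theta> (dz i)))
          (tlsc (- gen i) (\<Sum>k\<in>{1..4}. \<Sum>l\<in>{1..4}. tlsc (cst (gmat k l)) (tens \<theta> (dz k) (dz l)))))
  \<and> (\<forall>i\<in>{1..4}. \<forall>j\<in>{1..4}.
        eqTB \<theta> (sigma \<theta> (tens \<theta> (dz i) (dz j))) (tlsc (cst (Rm \<theta> j i)) (tens \<theta> (dz j) (dz i))))"
proof -
  have p1: "\<forall>\<omega>. polyO \<omega> \<longrightarrow>
        eqTA \<theta> (sigma \<theta> (tens \<theta> \<omega> nu)) (tens \<theta> nu \<omega>) \<and>
        eqTA \<theta> (sigma \<theta> (tens \<theta> nu \<omega>)) (tens \<theta> \<omega> nu)"
    using part1a part1b by blast
  show ?thesis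
    using p1 part2a part2b part3 part4 part5 part6 by blast
qed

end
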